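(* Let $\Re$ be a commutative ring with unit, let $n\ge 3$, and let $U_n$ be the cycle with vertices $v_1,\dots,v_n$ and edges $(v_i,v_{i+1})$, $i=1,\dots,n$ (indices taken modulo $n$, so $v_0=v_n$, $v_{n+1}=v_1$), equipped with a vertex-weight function $f_n:V(U_n)\to\Re$ and an edge-weight function $g_n:E(U_n)\to\Re$. Then for every fixed vertex $v_j$, \[ F(U_n; f_n, g_n; v_j)=\sum_{q=1}^{n}\Big(f_n(v_j)\prod_{k=0}^{q-2}g_n(v_k^1,v_k^2)f_n(v_k^2)\Big(1+\sum_{s=0}^{n-q-1}\prod_{k=0}^{s}g_n(v_k^3,v_k^4)f_n(v_k^4)\Big)\Big), \] where $v_k^1=v_{(j+k)\bmod n}$, $v_k^2=v_{(j+k+1)\bmod n}$, $v_k^3=v_{(n+j-k)\bmod n}$, $v_k^4=v_{(n+j-k-1)\bmod n}$ (with $v_0$ meaning $v_n$), and empty products equal $1$.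
   Context: For a graph $G$ with vertex weights $f$ and edge weights $g$ in $\Re$, a subtree is a nonempty subgraph of $G$ that is a tree (single vertices included). The weight of a subtree $T$ is $\omega(T)=\prod_{v\in V(T)}f(v)\prod_{e\in E(T)}g(e)$. For a vertex $v$, $F(G;f,g;v)=\sum \omega(T)$, the sum over all subtrees $T$ of $G$ containing $v$. *)

theory Defs
  imports Main
begin

definition edge_rel :: "'a set set \<Rightarrow> 'a \<Rightarrow> 'a \<Rightarrow> bool" where
  "edge_rel E u v \<longleftrightarrow> {u, v} \<in> E \<and> u \<noteq> v"

definition connected_graph :: "'a set \<Rightarrow> 'a set set \<Rightarrow> bool" where
  "connected_graph V E \<longleftrightarrow> (\<forall>u\<in>V. \<forall>v\<in>V. (edge_rel E)\<^sup>*\<^sup>* u v)"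

definition is_cycle :: "'a set set \<Rightarrow> 'a list \<Rightarrow> bool" where
  "is_cycle E cs \<longleftrightarrow> length cs \<ge> 3 \<and> distinct cs \<and>
     (\<forall>i < length cs. {cs ! i, cs ! ((i + 1) mod length cs)} \<in> E)"

definition acyclic_graph :: "'a set set \<Rightarrow> bool" where
  "acyclic_graph E \<longleftrightarrow> \<not> (\<exists>cs. is_cycle E cs)"

definition is_tree :: "'a set \<Rightarrow> 'a set set \<Rightarrow> bool" where
  "is_tree V E \<longleftrightarrow> V \<noteq> {} \<and> connected_graph V E \<and> acyclic_graph E"

definition subtrees :: "'a set \<Rightarrow> 'a set set \<Rightarrow> ('a set \<times> 'a set set) set" where
  "subtrees V E = {(VT, ET). VT \<subseteq> V \<and> ET \<subseteq> E \<and> (\<forall>e\<in>ET. e \<subseteq> VT) \<and> is_tree VT ET}"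

definition tree_weight :: "('a \<Rightarrow> 'r::comm_ring_1) \<Rightarrow> ('a set \<Rightarrow> 'r) \<Rightarrow> 'a set \<times> 'a set set \<Rightarrow> 'r" where
  "tree_weight f g T = (\<Prod>v\<in>fst T. f v) * (\<Prod>e\<in>snd T. g e)"

definition subtree_gen :: "'a set \<Rightarrow> 'a set set \<Rightarrow> ('a \<Rightarrow> 'r::comm_ring_1) \<Rightarrow> ('a set \<Rightarrow> 'r) \<Rightarrow> 'a \<Rightarrow> 'r" where
  "subtree_gen V E f g v = (\<Sum>T\<in>{T \<in> subtrees V E. v \<in> fst T}. tree_weight f g T)"

text \<open>The cycle U_n: vertices v_1..v_n represented by 1..n, edges {i, i+1} (indices mod n).\<close>
definition cyc_vertices :: "nat \<Rightarrow> nat set" where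
  "cyc_vertices n = {1..n}"

definition cyc_edges :: "nat \<Rightarrow> nat set set" where
  "cyc_edges n = (\<lambda>i. {i, i mod n + 1}) ` {1..n}"

definition cyc_idx :: "nat \<Rightarrow> nat \<Rightarrow> nat" where
  "cyc_idx n m = (if m mod n = 0 then n else m mod n)"

end

theory Submission
  imports Defs
begin

lemma prod_int_cc:
  fixes h :: "int \<Rightarrow> 'r::comm_monoid_mult"
  shows "(\<Prod>i\<in>{- int b..int a}. h i) = h 0 * (\<Prod>k<a. h (int k + 1)) * (\<Prod>k<b. h (- int k - 1))"
proof (induction b)
  case 0
  show ?case
  proof (induction a)
    case 0 then show ?case by simp
  next
    case (Suc a)
    have "{- int 0..int (Suc a)} = insert (int a + 1) {- int 0..int a}" by auto
    then show ?case using Suc by (simp add: ac_simps)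
  qed
next
  case (Suc b)
  have "{- int (Suc b)..int a} = insert (- int b - 1) {- int b..int a}" by auto
  then show ?case using Suc by (simp add: ac_simps)
qed

lemma prod_int_co:
  fixes h :: "int \<Rightarrow> 'r::comm_monoid_mult"
  shows "(\<Prod>i\<in>{- int b..<int a}. h i) = (\<Prod>k<a. h (int k)) * (\<Prod>k<b. h (- int k - 1))"
proof (induction b)
  case 0
  show ?case
  proof (induction a)
    case 0 then show ?case by simp
  next
    case (Suc a)
    have "{- int 0..<int (Suc a)} = insert (int a) {- int 0..<int a}" by auto
    then show ?case using Suc by (simp add: ac_simps)
  qed
next
  case (Suc b)
  have "{- int (Suc b)..<int a} = insert (- int b - 1) {- int b..<int a}" by auto
  then show ?case using Suc by (simp add: ac_simps)
qed

lemma edge_pm: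
  assumes "\<forall>e\<in>ET. \<exists>x y. e = {x,y} \<and> pos y = pos x + (1::int)"
    and "{x, y} \<in> ET" and "x \<noteq> y"
  shows "pos y = pos x + 1 \<or> pos x = pos y + 1"
proof -
  obtain p q where "{x,y} = {p,q}" "pos q = pos p + 1" using assms(1,2) by blast
  then show ?thesis using assms(3) by (auto simp: doubleton_eq_iff)
qed

lemma acyc_pos:
  assumes inj: "inj_on pos (\<Union>ET)"
    and ed: "\<forall>e\<in>ET. \<exists>x y. e = {x,y} \<and> pos y = pos x + (1::int)"
  shows "acyclic_graph ET"
  unfolding acyclic_graph_def
proof
  assume "\<exists>cs. is_cycle ET cs"
  then obtain cs where c: "is_cycle ET cs" by blast
  define L where "L = length cs"
  have L3: "L \<ge> 3" and dist: "distinct cs"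
    and edg: "\<And>i. i < L \<Longrightarrow> {cs ! i, cs ! ((i + 1) mod L)} \<in> ET"
    using c unfolding is_cycle_def L_def by auto
  have fin: "finite (pos ` set cs)" and ne: "pos ` set cs \<noteq> {}" using L3 L_def by auto
  obtain x where x: "x \<in> set cs" "pos x = Min (pos ` set cs)"
    using Min_in[OF fin ne] by auto
  have xmin: "\<And>y. y \<in> set cs \<Longrightarrow> pos x \<le> pos y" using x Min_le[OF fin] by auto
  obtain i0 where i0: "i0 < L" "cs ! i0 = x" using x(1) unfolding L_def by (auto simp: in_set_conv_nth)
  define i1 where "i1 = (i0 + 1) mod L"
  define i2 where "i2 = (i0 + L - 1) mod L"
  have i1L: "i1 < L" and i2L: "i2 < L" using L3 by (auto simp: i1_def i2_def)
  have i2s: "(i2 + 1) mod L = i0"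
  proof -
    have "(i2 + 1) mod L = (i0 + L - 1 + 1) mod L" unfolding i2_def by (rule mod_add_left_eq)
    also have "i0 + L - 1 + 1 = i0 + L" using L3 by simp
    finally show ?thesis using i0 by simp
  qed
  have d01: "i1 \<noteq> i0"
  proof (cases "i0 + 1 < L")
    case True then show ?thesis by (simp add: i1_def)
  next
    case False then have "i0 + 1 = L" using i0 by simp
    then show ?thesis using L3 by (simp add: i1_def)
  qed
  have d02: "i2 \<noteq> i0" using i2s d01 i1_def by metis
  have d12: "i1 \<noteq> i2"
  proof
    assume "i1 = i2"
    then have "(i1 + 1) mod L = i0" using i2s by simp
    moreover have "(i1 + 1) mod L = (i0 + 1 + 1) mod L" unfolding i1_def by (rule mod_add_left_eq)
    ultimately have h: "(i0 + 2) mod L = i0" by simp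
    show False
    proof (cases "i0 + 2 < L")
      case True then show ?thesis using h by simp
    next
      case False
      then have "(i0 + 2) mod L = (i0 + 2 - L) mod L" by (simp add: le_mod_geq)
      also have "\<dots> = i0 + 2 - L" using L3 i0 by simp
      finally show ?thesis using h False L3 by simp
    qed
  qed
  let ?y = "cs ! i1" and ?z = "cs ! i2"
  have e1: "{x, ?y} \<in> ET" using edg[OF i0(1)] i0 unfolding i1_def by simp
  have e2: "{?z, x} \<in> ET" using edg[OF i2L] i2s i0 by simp
  have xy: "x \<noteq> ?y" using dist d01 i0 i1L L_def by (metis nth_eq_iff_index_eq)
  have xz: "x \<noteq> ?z" using dist d02 i0 i2L L_def by (metis nth_eq_iff_index_eq)
  have yz: "?y \<noteq> ?z" using dist d12 i1L i2L L_def by (metis nth_eq_iff_index_eq)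
  have "pos ?y = pos x + 1 \<or> pos x = pos ?y + 1" using edge_pm[OF ed e1 xy] .
  moreover have "pos x \<le> pos ?y" using xmin i1L L_def by simp
  ultimately have py: "pos ?y = pos x + 1" by linarith
  have "pos x = pos ?z + 1 \<or> pos ?z = pos x + 1" using edge_pm[OF ed e2] xz by metis
  moreover have "pos x \<le> pos ?z" using xmin i2L L_def by simp
  ultimately have pz: "pos ?z = pos x + 1" by linarith
  have "?y \<in> \<Union>ET" "?z \<in> \<Union>ET" using e1 e2 by blast+
  then have "?y = ?z" using inj py pz by (metis inj_on_def)
  then show False using yz by simp
qed
context
  fixes n j :: nat
  assumes n3: "3 \<le> n" and j1: "1 \<le> j" and jn: "j \<le> n"
begin

definition vv :: "int \<Rightarrow> nat" where
  "vv i = nat ((int j - 1 + i) mod int n) + 1"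

definition ee :: "int \<Rightarrow> nat set" where
  "ee i = {vv i, vv (i + 1)}"

definition posw :: "int \<Rightarrow> nat \<Rightarrow> int" where
  "posw w u = w + ((int u - int j - w) mod int n)"

lemma n_pos: "0 < n" using n3 by simp

lemma vv_range: "vv i \<in> {1..n}"
proof -
  have "(int j - 1 + i) mod int n < int n" using n_pos by simp
  moreover have "0 \<le> (int j - 1 + i) mod int n" using n_pos by simp
  ultimately show ?thesis unfolding vv_def by auto
qed

lemma vv_eq_iff: "vv i = vv k \<longleftrightarrow> i mod int n = k mod int n"
proof -
  have "vv i = vv k \<longleftrightarrow> (int j - 1 + i) mod int n = (int j - 1 + k) mod int n"
    unfolding vv_def using n_pos by (simp add: eq_nat_nat_iff)
  also have "\<dots> \<longleftrightarrow> int n dvd (i - k)" by (simp add: mod_eq_dvd_iff)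
  also have "\<dots> \<longleftrightarrow> i mod int n = k mod int n" by (simp add: mod_eq_dvd_iff)
  finally show ?thesis .
qed

lemma vv_per: "vv (i + int n) = vv i"
  by (simp add: vv_eq_iff)

lemma vv_0: "vv 0 = j"
  unfolding vv_def using j1 jn by simp

lemma vv_succ: "vv (i + 1) = vv i mod n + 1"
proof -
  define x where "x = (int j - 1 + i) mod int n"
  have x0: "0 \<le> x" and xn: "x < int n" using n_pos by (auto simp: x_def)
  have "(int j - 1 + (i + 1)) mod int n = (x + 1) mod int n"
    unfolding x_def by (simp add: mod_simps add.assoc)
  have e: "vv (i + 1) = nat ((x + 1) mod int n) + 1" "vv i = nat x + 1"
    unfolding vv_def x_def using \<open>(int j - 1 + (i + 1)) mod int n = (x + 1) mod int n\<close> by (auto simp: x_def)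
  show ?thesis
  proof (cases "x + 1 = int n")
    case True
    then have "nat x + 1 = n" using x0 by linarith
    then show ?thesis using e True by simp
  next
    case False
    then have "x + 1 < int n" using xn by simp
    then have "nat x + 1 < n" using x0 by linarith
    then show ?thesis using e x0 \<open>x + 1 < int n\<close> by (simp add: nat_add_distrib)
  qed
qed

lemma ee_eq_iff: "ee i = ee k \<longleftrightarrow> i mod int n = k mod int n"
proof
  assume "i mod int n = k mod int n"
  then have "(i+1) mod int n = (k+1) mod int n" by (metis mod_add_left_eq)
  then show "ee i = ee k" unfolding ee_def using \<open>i mod int n = k mod int n\<close> vv_eq_iff by metis
next
  assume "ee i = ee k"
  then have "(vv i = vv k \<and> vv (i+1) = vv (k+1)) \<or> (vv i = vv (k+1) \<and> vv (i+1) = vv k)"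
    unfolding ee_def by (simp add: doubleton_eq_iff)
  then show "i mod int n = k mod int n"
  proof
    assume "vv i = vv (k+1) \<and> vv (i+1) = vv k"
    then have "int n dvd (i - (k+1))" "int n dvd (i + 1 - k)"
      by (simp_all add: vv_eq_iff mod_eq_dvd_iff)
    then have "int n dvd ((i + 1 - k) - (i - (k+1)))" using dvd_diff by blast
    then have "int n dvd 2" by simp
    then have "int n \<le> 2" using zdvd_imp_le[of "int n" 2] by simp
    then show ?thesis using n3 by simp
  qed (simp add: vv_eq_iff)
qed

lemma posw_range: "posw w u \<in> {w..w + int n - 1}"
  unfolding posw_def using n_pos by (simp add: int_one_le_iff_zero_less pos_mod_bound)

lemma vv_posw: "u \<in> {1..n} \<Longrightarrow> vv (posw w u) = u"
proof -
  assume u: "u \<in> {1..n}"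
  have "(int j - 1 + posw w u) mod int n = ((int j - 1 + w) + ((int u - int j - w) mod int n)) mod int n"
    unfolding posw_def by (simp add: algebra_simps)
  also have "\<dots> = ((int j - 1 + w) + (int u - int j - w)) mod int n" by (rule mod_add_right_eq)
  also have "\<dots> = (int u - 1) mod int n" by (simp add: algebra_simps)
  also have "\<dots> = int u - 1" using u by simp
  finally show ?thesis unfolding vv_def using u by auto
qed

lemma posw_vv: "i \<in> {w..w + int n - 1} \<Longrightarrow> posw w (vv i) = i"
proof -
  assume i: "i \<in> {w..w + int n - 1}"
  have "int (vv i) = (int j - 1 + i) mod int n + 1" using n_pos by (simp add: vv_def)
  then have "(int (vv i) - int j - w) mod int n = ((int j - 1 + i) mod int n + (1 - int j - w)) mod int n"
    by (simp add: algebra_simps)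
  also have "\<dots> = ((int j - 1 + i) + (1 - int j - w)) mod int n" by (rule mod_add_left_eq)
  also have "\<dots> = (i - w) mod int n" by (simp add: algebra_simps)
  also have "\<dots> = i - w" using i by simp
  finally show ?thesis unfolding posw_def by simp
qed

lemma cyc_idx_vv: "1 \<le> m \<Longrightarrow> cyc_idx n m = vv (int m - int j)"
proof -
  assume m: "1 \<le> m"
  have "vv (int m - int j) = nat ((int m - 1) mod int n) + 1" unfolding vv_def by simp
  also have "\<dots> = (m - 1) mod n + 1"
  proof -
    have "int m - 1 = int (m - 1)" using m by simp
    then show ?thesis by (metis nat_int zmod_int)
  qed
  also have "\<dots> = cyc_idx n m"
  proof -
    obtain k where k: "m = Suc k" using m by (cases m) auto
    show ?thesis unfolding cyc_idx_def k using n_pos by (auto simp: mod_Suc)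
  qed
  finally show ?thesis by simp
qed

lemma ee_in_edges: "ee i \<in> cyc_edges n"
  unfolding cyc_edges_def ee_def vv_succ using vv_range by blast

lemma edges_ee: "e \<in> cyc_edges n \<Longrightarrow> \<exists>i. e = ee i"
proof -
  assume "e \<in> cyc_edges n"
  then obtain t where t: "t \<in> {1..n}" "e = {t, t mod n + 1}" unfolding cyc_edges_def by auto
  have "cyc_idx n t = t" using t unfolding cyc_idx_def by (cases "t = n") auto
  then have "vv (int t - int j) = t" using cyc_idx_vv t by auto
  then have "e = ee (int t - int j)" unfolding ee_def vv_succ t(2) by simp
  then show ?thesis by blast
qed

lemma vv_neq_succ: "vv i \<noteq> vv (i + 1)"
proof
  assume "vv i = vv (i + 1)"
  then have "int n dvd (i + 1 - i)" by (simp add: vv_eq_iff mod_eq_dvd_iff)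
  then show False using n3 by simp
qed

lemma inj_posw: "inj_on (posw w) {1..n}"
  by (metis inj_on_inverseI vv_posw)

definition arc :: "nat \<Rightarrow> nat \<Rightarrow> nat set \<times> nat set set" where
  "arc a b = (vv ` {- int b..int a}, ee ` {- int b..<int a})"

lemma rtranclp_sym_edge: "(edge_rel E)\<^sup>*\<^sup>* x y \<Longrightarrow> (edge_rel E)\<^sup>*\<^sup>* y x"
proof -
  assume "(edge_rel E)\<^sup>*\<^sup>* x y"
  then have "(edge_rel E)\<inverse>\<inverse>\<^sup>*\<^sup>* y x" by (rule rtranclp_converseI)
  moreover have "(edge_rel E)\<inverse>\<inverse> = edge_rel E"
    by (auto simp: fun_eq_iff edge_rel_def insert_commute)
  ultimately show ?thesis by simp
qed

lemma arc_subtree: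
  assumes ab: "a + b \<le> n - 1"
  shows "arc a b \<in> subtrees (cyc_vertices n) (cyc_edges n) \<and> j \<in> fst (arc a b)"
proof -
  define VT where "VT = vv ` {- int b..int a}"
  define ET where "ET = ee ` {- int b..<int a}"
  have sub1: "VT \<subseteq> cyc_vertices n" using vv_range by (auto simp: VT_def cyc_vertices_def)
  have sub2: "ET \<subseteq> cyc_edges n" using ee_in_edges by (auto simp: ET_def)
  have sub3: "\<forall>e\<in>ET. e \<subseteq> VT" by (auto simp: ET_def VT_def ee_def)
  have jin: "j \<in> VT" unfolding VT_def using vv_0[symmetric] by (intro image_eqI[where x=0]) auto
  have chain: "k \<le> a + b \<Longrightarrow> (edge_rel ET)\<^sup>*\<^sup>* (vv (- int b)) (vv (- int b + int k))" for k
  proof (induction k)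
    case 0 then show ?case by simp
  next
    case (Suc k)
    have "ee (- int b + int k) \<in> ET" using Suc.prems by (auto simp: ET_def)
    then have "edge_rel ET (vv (- int b + int k)) (vv (- int b + int k + 1))"
      unfolding edge_rel_def ee_def using vv_neq_succ by auto
    moreover have "- int b + int (Suc k) = - int b + int k + 1" by simp
    ultimately show ?case using Suc by (metis Suc_leD rtranclp.rtrancl_into_rtrancl)
  qed
  have reach: "u \<in> VT \<Longrightarrow> (edge_rel ET)\<^sup>*\<^sup>* (vv (- int b)) u" for u
  proof -
    assume "u \<in> VT"
    then obtain x where x: "x \<in> {- int b..int a}" "u = vv x" by (auto simp: VT_def)
    then have "x = - int b + int (nat (x + int b))" "nat (x + int b) \<le> a + b" by auto
    then show ?thesis using chain x by metis
  qed
  have conn: "connected_graph VT ET" unfolding connected_graph_def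
    using reach rtranclp_sym_edge by (meson rtranclp_trans)
  have acyc: "acyclic_graph ET"
  proof (rule acyc_pos[where pos = "posw (- int b)"])
    have "\<Union>ET \<subseteq> {1..n}" using sub3 sub1 unfolding cyc_vertices_def by blast
    then show "inj_on (posw (- int b)) (\<Union>ET)" using inj_posw inj_on_subset by blast
    show "\<forall>e\<in>ET. \<exists>x y. e = {x, y} \<and> posw (- int b) y = posw (- int b) x + 1"
    proof
      fix e assume "e \<in> ET"
      then obtain i where i: "i \<in> {- int b..<int a}" "e = ee i" by (auto simp: ET_def)
      have "posw (- int b) (vv i) = i" "posw (- int b) (vv (i + 1)) = i + 1"
        using i ab n3 by (auto intro!: posw_vv)
      then show "\<exists>x y. e = {x, y} \<and> posw (- int b) y = posw (- int b) x + 1"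
        using i unfolding ee_def by (intro exI[of _ "vv i"] exI[of _ "vv (i + 1)"]) simp
    qed
  qed
  have "is_tree VT ET" unfolding is_tree_def using jin conn acyc by auto
  then show ?thesis using sub1 sub2 sub3 jin unfolding subtrees_def arc_def VT_def[symmetric] ET_def[symmetric]
    by auto
qed

lemma missing_edge:
  assumes sub: "ET \<subseteq> cyc_edges n" and ac: "acyclic_graph ET"
  shows "\<exists>m\<in>{0..<int n}. ee m \<notin> ET"
proof (rule ccontr)
  assume "\<not> ?thesis"
  then have all: "\<And>m. m \<in> {0..<int n} \<Longrightarrow> ee m \<in> ET" by blast
  define cs where "cs = map (\<lambda>k. vv (int k)) [0..<n]"
  have "inj_on (\<lambda>k. vv (int k)) {0..<n}"
  proof (rule inj_onI)
    fix k k' assume "k \<in> {0..<n}" "k' \<in> {0..<n}" "vv (int k) = vv (int k')"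
    then show "k = k'" by (simp add: vv_eq_iff)
  qed
  then have "distinct cs" unfolding cs_def by (simp add: distinct_map)
  moreover have "length cs = n" unfolding cs_def by simp
  moreover have "\<forall>i < n. {cs ! i, cs ! ((i + 1) mod n)} \<in> ET"
  proof (intro allI impI)
    fix i assume i: "i < n"
    have "vv (int ((i + 1) mod n)) = vv (int i + 1)"
      by (simp add: vv_eq_iff zmod_int add.commute)
    then have "{cs ! i, cs ! ((i + 1) mod n)} = ee (int i)"
      unfolding cs_def ee_def using i n_pos by simp
    then show "{cs ! i, cs ! ((i + 1) mod n)} \<in> ET" using all i by simp
  qed
  ultimately have "is_cycle ET cs" unfolding is_cycle_def using n3 by simp
  then show False using ac unfolding acyclic_graph_def by blast
qed

lemma subtree_arc:
  assumes T: "(VT, ET) \<in> subtrees (cyc_vertices n) (cyc_edges n)" and jT: "j \<in> VT"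
  shows "\<exists>a b. a + b \<le> n - 1 \<and> (VT, ET) = arc a b"
proof -
  have VTs: "VT \<subseteq> {1..n}" and ETs: "ET \<subseteq> cyc_edges n" and EV: "\<forall>e\<in>ET. e \<subseteq> VT"
    and conn: "connected_graph VT ET" and ac: "acyclic_graph ET"
    using T unfolding subtrees_def is_tree_def cyc_vertices_def by auto
  obtain m where m: "m \<in> {0..<int n}" "ee m \<notin> ET" using missing_edge[OF ETs ac] by blast
  define w where "w = m + 1 - int n"
  define pos where "pos = posw w"
  have win: "\<And>i. i \<in> {w..m} \<Longrightarrow> pos (vv i) = i" unfolding pos_def
    by (rule posw_vv) (auto simp: w_def)
  have pv: "\<And>u. u \<in> {1..n} \<Longrightarrow> vv (pos u) = u" unfolding pos_def by (rule vv_posw)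
  have pr: "\<And>u. pos u \<in> {w..m}" unfolding pos_def
  proof -
    fix u show "posw w u \<in> {w..m}" using posw_range[of w u] by (simp add: w_def)
  qed
  have ewin: "\<exists>i\<in>{w..<m}. e = ee i" if eET: "e \<in> ET" for e
  proof -
    obtain i0 where i0: "e = ee i0" using edges_ee ETs eET by blast
    define i where "i = w + (i0 - w) mod int n"
    have "i mod int n = (w + (i0 - w)) mod int n" unfolding i_def by (rule mod_add_right_eq)
    then have "ee i = ee i0" by (simp add: ee_eq_iff)
    moreover have "i \<in> {w..m}"
    proof -
      have "0 \<le> (i0 - w) mod int n" "(i0 - w) mod int n < int n" using n_pos by simp_all
      then show ?thesis unfolding i_def w_def by simp
    qed
    ultimately have "i \<in> {w..<m}" using m(2) eET i0 by (cases "i = m") auto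
    then show ?thesis using \<open>ee i = ee i0\<close> i0 by blast
  qed
  have C: "(edge_rel ET)\<^sup>*\<^sup>* x y \<Longrightarrow> \<forall>i. min (pos x) (pos y) \<le> i \<and> i < max (pos x) (pos y) \<longrightarrow> ee i \<in> ET" for x y
  proof (induction rule: rtranclp_induct)
    case base then show ?case by auto
  next
    case (step y z)
    then have yz: "{y, z} \<in> ET" "y \<noteq> z" unfolding edge_rel_def by auto
    obtain i' where i': "i' \<in> {w..<m}" "{y, z} = ee i'" using ewin[OF yz(1)] by blast
    have pi: "pos (vv i') = i'" "pos (vv (i' + 1)) = i' + 1" using i' win by auto
    have "(y = vv i' \<and> z = vv (i' + 1)) \<or> (y = vv (i' + 1) \<and> z = vv i')"
      using i'(2) yz(2) unfolding ee_def by (auto simp: doubleton_eq_iff)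
    then have pp: "(pos y = i' \<and> pos z = i' + 1) \<or> (pos y = i' + 1 \<and> pos z = i')" using pi by auto
    show ?case
    proof (intro allI impI)
      fix i assume "min (pos x) (pos z) \<le> i \<and> i < max (pos x) (pos z)"
      then have "i = i' \<or> (min (pos x) (pos y) \<le> i \<and> i < max (pos x) (pos y))" using pp by arith
      then show "ee i \<in> ET" using step.IH i'(2) yz(1) by auto
    qed
  qed
  define P where "P = pos ` VT"
  have finP: "finite P" unfolding P_def using VTs finite_subset by blast
  have pj: "pos j = 0" using win[of 0] vv_0 m unfolding w_def by auto
  have neP: "0 \<in> P" unfolding P_def using pj jT by force
  define lo where "lo = Min P"
  define hi where "hi = Max P"
  have lo0: "lo \<le> 0" and hi0: "0 \<le> hi" using finP neP by (auto simp: lo_def hi_def)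
  have "lo \<in> P" "hi \<in> P" using finP neP unfolding lo_def hi_def by (auto intro: Min_in Max_in)
  then obtain ulo uhi where u: "ulo \<in> VT" "pos ulo = lo" "uhi \<in> VT" "pos uhi = hi"
    unfolding P_def by auto
  have Pb: "\<And>p. p \<in> P \<Longrightarrow> lo \<le> p \<and> p \<le> hi" using finP unfolding lo_def hi_def by auto
  have lohi: "w \<le> lo" "hi \<le> m" using pr u by (metis atLeastAtMost_iff)+
  have c1: "(edge_rel ET)\<^sup>*\<^sup>* j ulo" "(edge_rel ET)\<^sup>*\<^sup>* j uhi"
    using conn jT u unfolding connected_graph_def by auto
  have inET: "\<And>i. i \<in> {lo..<hi} \<Longrightarrow> ee i \<in> ET"
  proof -
    fix i assume i: "i \<in> {lo..<hi}"
    show "ee i \<in> ET"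
    proof (cases "i < 0")
      case True then show ?thesis using C[OF c1(1)] pj u i lo0 by auto
    next
      case False then show ?thesis using C[OF c1(2)] pj u i hi0 by auto
    qed
  qed
  have ETeq: "ET = ee ` {lo..<hi}"
  proof
    show "ee ` {lo..<hi} \<subseteq> ET" using inET by blast
    show "ET \<subseteq> ee ` {lo..<hi}"
    proof
      fix e assume e: "e \<in> ET"
      then obtain i where i: "i \<in> {w..<m}" "e = ee i" using ewin by blast
      have "vv i \<in> VT" "vv (i + 1) \<in> VT" using EV e i unfolding ee_def by auto
      moreover have "pos (vv i) = i" "pos (vv (i + 1)) = i + 1" using win i by auto
      ultimately have "i \<in> P" "i + 1 \<in> P" unfolding P_def by (metis imageI)+
      then have "i \<in> {lo..<hi}" using Pb by fastforce
      then show "e \<in> ee ` {lo..<hi}" using i by blast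
    qed
  qed
  have VTeq: "VT = vv ` {lo..hi}"
  proof
    show "VT \<subseteq> vv ` {lo..hi}"
    proof
      fix u assume u: "u \<in> VT"
      then have "vv (pos u) = u" using pv VTs by auto
      moreover have "pos u \<in> {lo..hi}" using Pb u unfolding P_def by auto
      ultimately show "u \<in> vv ` {lo..hi}" by (metis imageI)
    qed
    show "vv ` {lo..hi} \<subseteq> VT"
    proof
      fix u assume "u \<in> vv ` {lo..hi}"
      then obtain i where i: "i \<in> {lo..hi}" "u = vv i" by auto
      show "u \<in> VT"
      proof (cases "i = hi")
        case True
        then have "u = vv (pos uhi)" using i u by simp
        also have "\<dots> = uhi" using pv VTs u by auto
        finally show ?thesis using u by simp
      next
        case False
        then have "ee i \<in> ET" using inET i by auto
        then show ?thesis using EV i unfolding ee_def by auto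
      qed
    qed
  qed
  have "nat hi + nat (- lo) \<le> n - 1" using lohi lo0 hi0 unfolding w_def by linarith
  moreover have "(VT, ET) = arc (nat hi) (nat (- lo))"
    unfolding arc_def VTeq ETeq using lo0 hi0 by simp
  ultimately show ?thesis by blast
qed

lemma win_eq: "i \<in> {c..<c + int n} \<Longrightarrow> k \<in> {c..<c + int n} \<Longrightarrow> i mod int n = k mod int n \<Longrightarrow> i = k"
proof -
  assume i: "i \<in> {c..<c + int n}" and k: "k \<in> {c..<c + int n}" and e: "i mod int n = k mod int n"
  have "(i - c) mod int n = (k - c) mod int n" using e by (simp add: mod_eq_dvd_iff)
  moreover have "(i - c) mod int n = i - c" "(k - c) mod int n = k - c" using i k by simp_all
  ultimately show "i = k" by simp
qed

lemma ee_mem_win: "ee k \<in> ee ` S \<Longrightarrow> S \<subseteq> {c..<c + int n} \<Longrightarrow> k \<in> {c..<c + int n} \<Longrightarrow> k \<in> S"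
proof -
  assume "ee k \<in> ee ` S" "S \<subseteq> {c..<c + int n}" "k \<in> {c..<c + int n}"
  then obtain i where "i \<in> S" "ee k = ee i" by auto
  then show "k \<in> S" using win_eq \<open>S \<subseteq> _\<close> \<open>k \<in> _\<close> by (metis ee_eq_iff subsetD)
qed

lemma arc_inj: "inj_on (\<lambda>(a, b). arc a b) {(a, b). a + b \<le> n - 1}"
proof (rule inj_onI)
  fix p p' assume p: "p \<in> {(a, b). a + b \<le> n - 1}" "p' \<in> {(a, b). a + b \<le> n - 1}"
    and pe: "(case p of (a, b) \<Rightarrow> arc a b) = (case p' of (a, b) \<Rightarrow> arc a b)"
  obtain a b a' b' where pp: "p = (a, b)" "p' = (a', b')" by fastforce
  have ab: "a + b \<le> n - 1" and ab': "a' + b' \<le> n - 1" and eq: "arc a b = arc a' b'"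
    using p pe pp by auto
  then have E: "ee ` {- int b..<int a} = ee ` {- int b'..<int a'}" unfolding arc_def by simp
  have A: "a = a'" if "a < a'" "a + b \<le> n - 1" "a' + b' \<le> n - 1"
     "ee ` {- int b..<int a} = ee ` {- int b'..<int a'}" for a b a' b' :: nat
  proof -
    have "ee (int a) \<in> ee ` {- int b..<int a}" using that by auto
    then have "int a \<in> {- int b..<int a}"
      by (rule ee_mem_win[where c = "- int b"]) (use that n3 in auto)
    then show ?thesis by simp
  qed
  have "a = a'" using A[OF _ ab ab' E] A[OF _ ab' ab E[symmetric]] by fastforce
  have B: "b = b'" if "b < b'" "a + b \<le> n - 1" "a + b' \<le> n - 1"
     "ee ` {- int b..<int a} = ee ` {- int b'..<int a}" for a b b' :: nat
  proof -
    have "ee (- int b - 1) \<in> ee ` {- int b..<int a}" using that by auto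
    then have "- int b - 1 \<in> {- int b..<int a}"
      by (rule ee_mem_win[where c = "int a - int n"]) (use that n3 in auto)
    then show ?thesis by simp
  qed
  have E': "ee ` {- int b..<int a} = ee ` {- int b'..<int a}" using E \<open>a = a'\<close> by simp
  have ab2: "a + b' \<le> n - 1" using ab' \<open>a = a'\<close> by simp
  have "b = b'"
  proof (cases b b' rule: linorder_cases)
    case less then show ?thesis using B[of b b' a] ab ab2 E' by blast
  next
    case greater then show ?thesis using B[of b' b a] ab ab2 E' by metis
  qed simp
  then show "p = p'" using \<open>a = a'\<close> pp by simp
qed

definition FF :: "('r::comm_ring_1) itself \<Rightarrow> (nat \<Rightarrow> 'r) \<Rightarrow> (nat set \<Rightarrow> 'r) \<Rightarrow> nat \<Rightarrow> 'r" where
  "FF _ f g a = (\<Prod>k<a. g (ee (int k)) * f (vv (int k + 1)))"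

definition BB :: "('r::comm_ring_1) itself \<Rightarrow> (nat \<Rightarrow> 'r) \<Rightarrow> (nat set \<Rightarrow> 'r) \<Rightarrow> nat \<Rightarrow> 'r" where
  "BB _ f g b = (\<Prod>k<b. g (ee (- int k - 1)) * f (vv (- int k - 1)))"

lemma arc_weight:
  fixes f :: "nat \<Rightarrow> 'r::comm_ring_1" and g :: "nat set \<Rightarrow> 'r"
  assumes ab: "a + b \<le> n - 1"
  shows "tree_weight f g (arc a b) = f j * FF TYPE('r) f g a * BB TYPE('r) f g b"
proof -
  have i1: "inj_on vv {- int b..int a}"
  proof (rule inj_onI)
    fix x y assume "x \<in> {- int b..int a}" "y \<in> {- int b..int a}" "vv x = vv y"
    then show "x = y" using win_eq[of x "- int b" y] ab n3 by (auto simp: vv_eq_iff)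
  qed
  have i2: "inj_on ee {- int b..<int a}"
  proof (rule inj_onI)
    fix x y assume "x \<in> {- int b..<int a}" "y \<in> {- int b..<int a}" "ee x = ee y"
    then show "x = y" using win_eq[of x "- int b" y] ab n3 by (auto simp: ee_eq_iff)
  qed
  have "tree_weight f g (arc a b) = (\<Prod>i\<in>{- int b..int a}. f (vv i)) * (\<Prod>i\<in>{- int b..<int a}. g (ee i))"
    unfolding tree_weight_def arc_def using prod.reindex[OF i1, of f] prod.reindex[OF i2, of g] by (simp add: comp_def)
  also have "\<dots> = (f (vv 0) * (\<Prod>k<a. f (vv (int k + 1))) * (\<Prod>k<b. f (vv (- int k - 1)))) *
      ((\<Prod>k<a. g (ee (int k))) * (\<Prod>k<b. g (ee (- int k - 1))))"
    by (simp only: prod_int_cc[of "\<lambda>i. f (vv i)"] prod_int_co[of "\<lambda>i. g (ee i)"])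
  also have "\<dots> = f j * FF TYPE('r) f g a * BB TYPE('r) f g b"
    unfolding FF_def BB_def prod.distrib vv_0 by (simp add: ac_simps)
  finally show ?thesis .
qed

lemma main:
  fixes f :: "nat \<Rightarrow> 'r::comm_ring_1" and g :: "nat set \<Rightarrow> 'r"
  shows "subtree_gen (cyc_vertices n) (cyc_edges n) f g j =
    (\<Sum>q = 1..n. f j *
       (\<Prod>k\<in>{0..<q - 1}. g {cyc_idx n (j + k), cyc_idx n (j + k + 1)} * f (cyc_idx n (j + k + 1))) *
       (1 + (\<Sum>s\<in>{0..<n - q}. \<Prod>k = 0..s.
              g {cyc_idx n (n + j - k), cyc_idx n (n + j - k - 1)} * f (cyc_idx n (n + j - k - 1)))))"
proof -
  define D where "D = {(a, b). a + b \<le> n - 1}"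
  let ?F = "FF TYPE('r) f g" and ?B = "BB TYPE('r) f g"
  have S: "{T \<in> subtrees (cyc_vertices n) (cyc_edges n). j \<in> fst T} = (\<lambda>(a, b). arc a b) ` D"
  proof
    show "{T \<in> subtrees (cyc_vertices n) (cyc_edges n). j \<in> fst T} \<subseteq> (\<lambda>(a, b). arc a b) ` D"
    proof
      fix T assume T: "T \<in> {T \<in> subtrees (cyc_vertices n) (cyc_edges n). j \<in> fst T}"
      obtain VT ET where TT: "T = (VT, ET)" by fastforce
      obtain a b where "a + b \<le> n - 1" "(VT, ET) = arc a b" using subtree_arc[of VT ET] T TT by auto
      then show "T \<in> (\<lambda>(a, b). arc a b) ` D" unfolding D_def TT by (auto intro: image_eqI[where x="(a,b)"])
    qed
    show "(\<lambda>(a, b). arc a b) ` D \<subseteq> {T \<in> subtrees (cyc_vertices n) (cyc_edges n). j \<in> fst T}"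
      using arc_subtree unfolding D_def by auto
  qed
  have "subtree_gen (cyc_vertices n) (cyc_edges n) f g j = (\<Sum>p\<in>D. tree_weight f g (case p of (a, b) \<Rightarrow> arc a b))"
    unfolding subtree_gen_def S using sum.reindex[OF arc_inj[folded D_def], of "tree_weight f g"]
    by (simp add: comp_def)
  also have "\<dots> = (\<Sum>p\<in>D. case p of (a, b) \<Rightarrow> f j * ?F a * ?B b)"
    by (rule sum.cong) (auto simp: D_def arc_weight)
  also have "D = Sigma {..<n} (\<lambda>a. {..n - 1 - a})" unfolding D_def using n3 by auto
  also have "(\<Sum>p\<in>Sigma {..<n} (\<lambda>a. {..n - 1 - a}). case p of (a, b) \<Rightarrow> f j * ?F a * ?B b)
      = (\<Sum>a<n. \<Sum>b\<le>n - 1 - a. f j * ?F a * ?B b)"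
    by (rule sum.Sigma[symmetric]) auto
  also have "\<dots> = (\<Sum>a<n. f j * ?F a * (\<Sum>b\<le>n - 1 - a. ?B b))"
    by (simp add: sum_distrib_left)
  finally have LHS: "subtree_gen (cyc_vertices n) (cyc_edges n) f g j = (\<Sum>a<n. f j * ?F a * (\<Sum>b\<le>n - 1 - a. ?B b))" .
  have X: "g {cyc_idx n (j + k), cyc_idx n (j + k + 1)} * f (cyc_idx n (j + k + 1)) = g (ee (int k)) * f (vv (int k + 1))" for k
  proof -
    have "cyc_idx n (j + k) = vv (int k)" "cyc_idx n (j + k + 1) = vv (int k + 1)"
      using cyc_idx_vv[of "j + k"] cyc_idx_vv[of "j + k + 1"] j1 by (simp_all add: add.commute)
    then show ?thesis by (simp add: ee_def)
  qed
  have Y: "g {cyc_idx n (n + j - k), cyc_idx n (n + j - k - 1)} * f (cyc_idx n (n + j - k - 1))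
      = g (ee (- int k - 1)) * f (vv (- int k - 1))" if k: "k < n - 1" for k
  proof -
    have "cyc_idx n (n + j - k) = vv (- int k + int n)" using cyc_idx_vv[of "n + j - k"] k j1
      by (simp add: of_nat_diff algebra_simps)
    also have "\<dots> = vv (- int k)" by (rule vv_per)
    finally have 1: "cyc_idx n (n + j - k) = vv (- int k)" .
    have "cyc_idx n (n + j - k - 1) = vv (- int k - 1 + int n)" using cyc_idx_vv[of "n + j - k - 1"] k j1
      by (simp add: of_nat_diff algebra_simps)
    also have "\<dots> = vv (- int k - 1)" by (rule vv_per)
    finally have 2: "cyc_idx n (n + j - k - 1) = vv (- int k - 1)" .
    show ?thesis unfolding 1 2 ee_def by (simp add: insert_commute)
  qed
  have R: "f j *
       (\<Prod>k\<in>{0..<Suc a - 1}. g {cyc_idx n (j + k), cyc_idx n (j + k + 1)} * f (cyc_idx n (j + k + 1))) *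
       (1 + (\<Sum>s\<in>{0..<n - Suc a}. \<Prod>k = 0..s.
              g {cyc_idx n (n + j - k), cyc_idx n (n + j - k - 1)} * f (cyc_idx n (n + j - k - 1))))
      = f j * ?F a * (\<Sum>b\<le>n - 1 - a. ?B b)" if a: "a < n" for a
  proof -
    have 1: "(\<Prod>k\<in>{0..<Suc a - 1}. g {cyc_idx n (j + k), cyc_idx n (j + k + 1)} * f (cyc_idx n (j + k + 1))) = ?F a"
      unfolding FF_def X by (simp add: atLeast0LessThan)
    have 2: "(\<Prod>k = 0..s. g {cyc_idx n (n + j - k), cyc_idx n (n + j - k - 1)} * f (cyc_idx n (n + j - k - 1)))
        = ?B (Suc s)" if s: "s \<in> {0..<n - Suc a}" for s
    proof -
      have "(\<Prod>k = 0..s. g {cyc_idx n (n + j - k), cyc_idx n (n + j - k - 1)} * f (cyc_idx n (n + j - k - 1)))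
          = (\<Prod>k = 0..s. g (ee (- int k - 1)) * f (vv (- int k - 1)))"
        by (rule prod.cong) (use s Y in auto)
      then show ?thesis unfolding BB_def by (simp add: atLeast0AtMost lessThan_Suc_atMost)
    qed
    have "1 + (\<Sum>s\<in>{0..<n - Suc a}. \<Prod>k = 0..s.
              g {cyc_idx n (n + j - k), cyc_idx n (n + j - k - 1)} * f (cyc_idx n (n + j - k - 1)))
        = ?B 0 + (\<Sum>s<n - Suc a. ?B (Suc s))"
    proof -
      have "(\<Sum>s\<in>{0..<n - Suc a}. \<Prod>k = 0..s.
              g {cyc_idx n (n + j - k), cyc_idx n (n + j - k - 1)} * f (cyc_idx n (n + j - k - 1)))
          = (\<Sum>s\<in>{0..<n - Suc a}. ?B (Suc s))" by (rule sum.cong[OF refl 2])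
      moreover have "?B 0 = 1" by (simp add: BB_def)
      ultimately show ?thesis by (simp add: atLeast0LessThan)
    qed
    also have "\<dots> = (\<Sum>b<Suc (n - Suc a). ?B b)" by (rule sum.lessThan_Suc_shift[symmetric])
    also have "\<dots> = (\<Sum>b\<le>n - 1 - a. ?B b)" by (simp add: lessThan_Suc_atMost)
    finally show ?thesis using 1 by simp
  qed
  have "(\<Sum>q = 1..n. f j *
       (\<Prod>k\<in>{0..<q - 1}. g {cyc_idx n (j + k), cyc_idx n (j + k + 1)} * f (cyc_idx n (j + k + 1))) *
       (1 + (\<Sum>s\<in>{0..<n - q}. \<Prod>k = 0..s.
              g {cyc_idx n (n + j - k), cyc_idx n (n + j - k - 1)} * f (cyc_idx n (n + j - k - 1)))))
     = (\<Sum>a<n. f j *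
       (\<Prod>k\<in>{0..<Suc a - 1}. g {cyc_idx n (j + k), cyc_idx n (j + k + 1)} * f (cyc_idx n (j + k + 1))) *
       (1 + (\<Sum>s\<in>{0..<n - Suc a}. \<Prod>k = 0..s.
              g {cyc_idx n (n + j - k), cyc_idx n (n + j - k - 1)} * f (cyc_idx n (n + j - k - 1)))))"
    by (simp only: One_nat_def sum.atLeast1_atMost_eq)
  also have "\<dots> = (\<Sum>a<n. f j * ?F a * (\<Sum>b\<le>n - 1 - a. ?B b))"
    by (rule sum.cong) (use R in auto)
  finally show ?thesis using LHS by simp
qed

end

theorem theorem2:
  fixes n j :: nat and f :: "nat \<Rightarrow> 'r::comm_ring_1" and g :: "nat set \<Rightarrow> 'r"
  assumes "n \<ge> 3" and "j \<in> {1..n}"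
  shows "subtree_gen (cyc_vertices n) (cyc_edges n) f g j =
    (\<Sum>q = 1..n. f j *
       (\<Prod>k\<in>{0..<q - 1}. g {cyc_idx n (j + k), cyc_idx n (j + k + 1)} * f (cyc_idx n (j + k + 1))) *
       (1 + (\<Sum>s\<in>{0..<n - q}. \<Prod>k = 0..s.
              g {cyc_idx n (n + j - k), cyc_idx n (n + j - k - 1)} * f (cyc_idx n (n + j - k - 1)))))"
  using main[of n j f g] assms by auto

end
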